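(* For every basis element $\Phi_{j,T,K}$ (with $K\in\mathbf K$, $m=|\overline K|$, $T\in\mathbf T_{m,l}$, $0\le j\le m-2l$): $$\hat\omega_N\Phi_{j,T,K}=\begin{cases}(j+1)\Phi_{j+1,T,K},& j<m-2l,\\ 0,& j=m-2l,\end{cases}\qquad \hat\omega_N^\dagger\Phi_{j,T,K}=\begin{cases}(m-2l-j+1)\Phi_{j-1,T,K},& j>0,\\ 0,& j=0.\end{cases}$$
   Context: $\mathcal H_N$ has basis $e_{-N},\dots,e_{N-1}$; $\psi_i$ is left exterior multiplication by $e_i$ and $\psi_i^\dagger$ the interior product with the dual covector $e_i^*$ ($e^*_i(e_k)=\delta_{ik}$). $\omega_N:=\sum_{i=1}^N(-1)^ie_{-i}\wedge e_{i-1}$, $\hat\omega_N\mu:=\omega_N\wedge\mu$, and $\hat\omega_N^\dagger:=\sum_{i=0}^{N-1}(-1)^i\psi^\dagger_{-i-1}\psi^\dagger_i$. $X_i:=(-1)^ie_i\wedge e_{-i-1}$. $\mathbf K$ = subsets $K\subset\{-N,\dots,N-1\}$ with $K\cap(-K-1)=\emptyset$; $e_K:=e_{K_k}\wedge\cdots\wedge e_{K_1}$ for $K_1<\dots<K_k$; $\overline K:=\{-1,\dots,-N\}\setminus(K\cup(-K-1))=\{\overline K_1,\dots,\overline K_m\}$; $\omega_{\overline K}:=\sum_aX_{\overline K_a}$. $\mathbf T_{m,l}$: standard Young tableaux of shape $(2^l,1^{m-2l})$, rows $i\le l$ with entries $a_{i,1}<a_{i,2}$; $V_T(X_{\overline K}):=\prod_{i=1}^l(X_{\overline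 K_{a_{i,1}}}-X_{\overline K_{a_{i,2}}})$; $\Phi_{j,T,K}:=\frac1{j!}\omega_{\overline K}^j\wedge V_T(X_{\overline K})\wedge e_K$. *)

theory Defs
  imports Complex_Main "HOL-Library.Function_Algebras"
begin

text \<open>Exterior algebra over the real space with basis e_i (i an integer).
  An element is a coefficient function on finite index sets: x S is the
  coefficient of the canonical basis monomial e_S := e_{s_k} wedge ... wedge e_{s_1}
  where S = {s_1 < ... < s_k} (decreasing order, as for e_K in the paper).
  All elements used below are supported on subsets of {-N..N-1}, i.e. they lie in
  the exterior algebra of H_N.\<close>

type_synonym ext = "int set \<Rightarrow> real"

definition ext_one :: ext where
  "ext_one = (\<lambda>S. if S = {} then 1 else 0)"

definition ext_smult :: "real \<Rightarrow> ext \<Rightarrow> ext" where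
  "ext_smult c x = (\<lambda>S. c * x S)"

text \<open>Sign of reordering e_A wedge e_B (both in decreasing order) into e_{A union B}.\<close>
definition wsign :: "int set \<Rightarrow> int set \<Rightarrow> real" where
  "wsign A B = (-1) ^ card {(a, b). a \<in> A \<and> b \<in> B \<and> a < b}"

definition wedge :: "ext \<Rightarrow> ext \<Rightarrow> ext" (infixr "\<^bold>\<and>" 70) where
  "wedge x y = (\<lambda>S. if finite S then (\<Sum>A\<in>Pow S. wsign A (S - A) * x A * y (S - A)) else 0)"

definition wpow :: "ext \<Rightarrow> nat \<Rightarrow> ext" where
  "wpow x j = ((wedge x) ^^ j) ext_one"

definition wedge_list :: "ext list \<Rightarrow> ext" where
  "wedge_list xs = foldr wedge xs ext_one"

definition e :: "int \<Rightarrow> ext" where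
  "e i = (\<lambda>S. if S = {i} then 1 else 0)"

definition psi :: "int \<Rightarrow> ext \<Rightarrow> ext" where
  "psi i x = e i \<^bold>\<and> x"

text \<open>psi_i^dagger : interior product with e_i^*; on monomials,
  iota_{e_i^*}(v_1 wedge ... wedge v_k) = sum_p (-1)^(p-1) e_i^*(v_p) v_1 ... (omit v_p) ... v_k.
  For e_T (decreasing order) with i in T, i sits at position 1 + #{t in T. t > i}.\<close>
definition psi_dag :: "int \<Rightarrow> ext \<Rightarrow> ext" where
  "psi_dag i x = (\<lambda>S. if finite S \<and> i \<notin> S
       then (-1) ^ card {s \<in> S. s > i} * x (insert i S) else 0)"

definition sgnpow :: "int \<Rightarrow> real" where
  "sgnpow i = (if even i then 1 else -1)"

definition eset :: "int set \<Rightarrow> ext" where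
  "eset K = wedge_list (map e (rev (sorted_list_of_set K)))"

definition omegaN :: "nat \<Rightarrow> ext" where
  "omegaN N = (\<Sum>i\<in>{1..int N}. ext_smult (sgnpow i) (e (-i) \<^bold>\<and> e (i - 1)))"

definition omega_hat :: "nat \<Rightarrow> ext \<Rightarrow> ext" where
  "omega_hat N \<mu> = omegaN N \<^bold>\<and> \<mu>"

definition omega_hat_dag :: "nat \<Rightarrow> ext \<Rightarrow> ext" where
  "omega_hat_dag N \<mu> = (\<Sum>i\<in>{0..int N - 1}. ext_smult (sgnpow i) (psi_dag (-i-1) (psi_dag i \<mu>)))"

definition Xe :: "int \<Rightarrow> ext" where
  "Xe i = ext_smult (sgnpow i) (e i \<^bold>\<and> e (-i-1))"

definition Kset :: "nat \<Rightarrow> int set set" where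
  "Kset N = {K. K \<subseteq> {-int N..int N - 1} \<and> K \<inter> ((\<lambda>k. -k-1) ` K) = {}}"

definition Kbar :: "nat \<Rightarrow> int set \<Rightarrow> int set" where
  "Kbar N K = {-int N..-1} - (K \<union> ((\<lambda>k. -k-1) ` K))"

text \<open>K-bar_a, 1-indexed, increasing\<close>
definition Kbar_nth :: "nat \<Rightarrow> int set \<Rightarrow> nat \<Rightarrow> int" where
  "Kbar_nth N K a = sorted_list_of_set (Kbar N K) ! (a - 1)"

definition omega_Kbar :: "nat \<Rightarrow> int set \<Rightarrow> ext" where
  "omega_Kbar N K = (\<Sum>a\<in>{1..card (Kbar N K)}. Xe (Kbar_nth N K a))"

text \<open>Standard Young tableaux of shape (2^l, 1^(m-2l)): T i c is the entry in row i,
  column c (rows and columns 1-indexed).\<close>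
definition syt_cells :: "nat \<Rightarrow> nat \<Rightarrow> (nat \<times> nat) set" where
  "syt_cells m l = {(i, c). 1 \<le> i \<and> i \<le> l \<and> (c = 1 \<or> c = 2)} \<union> {(i, 1) | i. l < i \<and> i \<le> m - l}"

definition SYT :: "nat \<Rightarrow> nat \<Rightarrow> (nat \<Rightarrow> nat \<Rightarrow> nat) set" where
  "SYT m l = {T. 2 * l \<le> m \<and>
     bij_betw (\<lambda>(i, c). T i c) (syt_cells m l) {1..m} \<and>
     (\<forall>i c. (i, c) \<in> syt_cells m l \<and> (i, Suc c) \<in> syt_cells m l \<longrightarrow> T i c < T i (Suc c)) \<and>
     (\<forall>i c. (i, c) \<in> syt_cells m l \<and> (Suc i, c) \<in> syt_cells m l \<longrightarrow> T i c < T (Suc i) c)}"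

definition VT :: "nat \<Rightarrow> int set \<Rightarrow> nat \<Rightarrow> (nat \<Rightarrow> nat \<Rightarrow> nat) \<Rightarrow> ext" where
  "VT N K l T = wedge_list (map (\<lambda>i. Xe (Kbar_nth N K (T i 1)) - Xe (Kbar_nth N K (T i 2))) [1..<Suc l])"

definition Phi :: "nat \<Rightarrow> nat \<Rightarrow> nat \<Rightarrow> (nat \<Rightarrow> nat \<Rightarrow> nat) \<Rightarrow> int set \<Rightarrow> ext" where
  "Phi N l j T K = ext_smult (1 / fact j) (wpow (omega_Kbar N K) j \<^bold>\<and> VT N K l T \<^bold>\<and> eset K)"

end

theory Submission
  imports Defs
begin


lemma sum_ext_apply: "(\<Sum>i\<in>I. f i) S = (\<Sum>i\<in>I. (f i :: ext) S)"
  by (induct I rule: infinite_finite_induct) auto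

definition avoids :: "int \<Rightarrow> ext \<Rightarrow> bool" where
  "avoids k x \<longleftrightarrow> (\<forall>S. x S \<noteq> 0 \<longrightarrow> k \<notin> S)"
definition allc :: "int \<Rightarrow> ext \<Rightarrow> bool" where
  "allc k x \<longleftrightarrow> (\<forall>S. x S \<noteq> 0 \<longrightarrow> k \<in> S)"
definition evenx :: "ext \<Rightarrow> bool" where
  "evenx x \<longleftrightarrow> (\<forall>S. x S \<noteq> 0 \<longrightarrow> even (card S))"
definition fin :: "ext \<Rightarrow> bool" where
  "fin x \<longleftrightarrow> (\<forall>S. infinite S \<longrightarrow> x S = 0)"
definition par :: "ext \<Rightarrow> ext" where
  "par x = (\<lambda>S. (-1) ^ card S * x S)"

lemma wedge_apply: "finite S \<Longrightarrow> (x \<^bold>\<and> y) S = (\<Sum>A\<in>Pow S. wsign A (S - A) * x A * y (S - A))"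
  by (simp add: wedge_def)
lemma wedge_inf: "infinite S \<Longrightarrow> (x \<^bold>\<and> y) S = 0"
  by (simp add: wedge_def)

lemma wedge_add_left: "(x + y) \<^bold>\<and> z = x \<^bold>\<and> z + y \<^bold>\<and> z"
  by (auto simp: wedge_def fun_eq_iff algebra_simps sum.distrib)
lemma wedge_add_right: "z \<^bold>\<and> (x + y) = z \<^bold>\<and> x + z \<^bold>\<and> y"
  by (auto simp: wedge_def fun_eq_iff algebra_simps sum.distrib)
lemma wedge_diff_left: "(x - y) \<^bold>\<and> z = x \<^bold>\<and> z - y \<^bold>\<and> z"
  by (auto simp: wedge_def fun_eq_iff algebra_simps sum_subtractf)
lemma wedge_diff_right: "z \<^bold>\<and> (x - y) = z \<^bold>\<and> x - z \<^bold>\<and> y"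
  by (auto simp: wedge_def fun_eq_iff algebra_simps sum_subtractf)
lemma wedge_smult_left: "ext_smult c x \<^bold>\<and> z = ext_smult c (x \<^bold>\<and> z)"
  by (auto simp: wedge_def fun_eq_iff ext_smult_def algebra_simps sum_distrib_left)
lemma wedge_smult_right: "z \<^bold>\<and> ext_smult c x = ext_smult c (z \<^bold>\<and> x)"
  by (auto simp: wedge_def fun_eq_iff ext_smult_def algebra_simps sum_distrib_left)
lemma wedge_zero_left[simp]: "0 \<^bold>\<and> z = 0"
  by (auto simp: wedge_def fun_eq_iff)
lemma wedge_zero_right[simp]: "z \<^bold>\<and> 0 = 0"
  by (auto simp: wedge_def fun_eq_iff)
lemma wedge_sum_left: "(\<Sum>i\<in>I. f i) \<^bold>\<and> z = (\<Sum>i\<in>I. f i \<^bold>\<and> z)"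
  by (auto simp: fun_eq_iff sum_ext_apply wedge_def sum_distrib_left sum_distrib_right intro: sum.swap)
lemma wedge_sum_right: "z \<^bold>\<and> (\<Sum>i\<in>I. f i) = (\<Sum>i\<in>I. z \<^bold>\<and> f i)"
  by (auto simp: fun_eq_iff sum_ext_apply wedge_def sum_distrib_left sum_distrib_right intro: sum.swap)

lemma smult_add: "ext_smult c (x + y) = ext_smult c x + ext_smult c y"
  by (auto simp: ext_smult_def fun_eq_iff algebra_simps)
lemma smult_smult: "ext_smult c (ext_smult d x) = ext_smult (c * d) x"
  by (auto simp: ext_smult_def fun_eq_iff algebra_simps)
lemma smult_zero[simp]: "ext_smult c 0 = 0" "ext_smult 0 x = 0"
  by (auto simp: ext_smult_def fun_eq_iff)
lemma smult_one[simp]: "ext_smult 1 x = x"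
  by (auto simp: ext_smult_def fun_eq_iff)
lemma smult_sum: "ext_smult c (\<Sum>i\<in>I. f i) = (\<Sum>i\<in>I. ext_smult c (f i))"
  by (auto simp: fun_eq_iff sum_ext_apply ext_smult_def sum_distrib_left)
lemma smult_sum_const: "(\<Sum>i\<in>I. (x::ext)) = ext_smult (real (card I)) x"
  by (auto simp: ext_smult_def fun_eq_iff sum_ext_apply)
lemma smult_addc: "ext_smult c x + ext_smult d x = ext_smult (c + d) x"
  by (auto simp: ext_smult_def fun_eq_iff algebra_simps)
lemma smult_diff: "x - y = x + ext_smult (-1) y"
  by (auto simp: ext_smult_def fun_eq_iff algebra_simps)

definition invs :: "int set \<Rightarrow> int set \<Rightarrow> (int \<times> int) set" where
  "invs A B = {(a, b). a \<in> A \<and> b \<in> B \<and> a < b}"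

lemma wsign_inv: "wsign A B = (-1) ^ card (invs A B)"
  by (simp add: wsign_def invs_def)

lemma inv_finite: "finite A \<Longrightarrow> finite B \<Longrightarrow> finite (invs A B)"
  by (rule finite_subset[of _ "A \<times> B"]) (auto simp: invs_def)

lemma wsign_union_left:
  assumes "finite A" "finite C" "finite B" "A \<inter> C = {}"
  shows "wsign (A \<union> C) B = wsign A B * wsign C B"
proof -
  have "invs (A \<union> C) B = invs A B \<union> invs C B" by (auto simp: invs_def)
  moreover have "invs A B \<inter> invs C B = {}" using assms(4) by (auto simp: invs_def)
  ultimately show ?thesis using assms
    by (simp add: wsign_inv card_Un_disjoint inv_finite power_add)
qed

lemma wsign_union_right:
  assumes "finite A" "finite C" "finite B" "A \<inter> C = {}"
  shows "wsign B (A \<union> C) = wsign B A * wsign B C"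
proof -
  have "invs B (A \<union> C) = invs B A \<union> invs B C" by (auto simp: invs_def)
  moreover have "invs B A \<inter> invs B C = {}" using assms(4) by (auto simp: invs_def)
  ultimately show ?thesis using assms
    by (simp add: wsign_inv card_Un_disjoint inv_finite power_add)
qed

lemma wsign_single_left: "wsign {i} B = (-1) ^ card {b\<in>B. i < b}"
proof -
  have "invs {i} B = (\<lambda>b. (i, b)) ` {b\<in>B. i < b}" by (auto simp: invs_def)
  moreover have "inj_on (\<lambda>b. (i, b)) {b\<in>B. i < b}" by (auto simp: inj_on_def)
  ultimately show ?thesis by (simp add: wsign_inv card_image)
qed

lemma wsign_single_right: "wsign A {i} = (-1) ^ card {a\<in>A. a < i}"
proof -
  have "invs A {i} = (\<lambda>a. (a, i)) ` {a\<in>A. a < i}" by (auto simp: invs_def)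
  moreover have "inj_on (\<lambda>a. (a, i)) {a\<in>A. a < i}" by (auto simp: inj_on_def)
  ultimately show ?thesis by (simp add: wsign_inv card_image)
qed

lemma wsign_empty[simp]: "wsign {} B = 1" "wsign A {} = 1"
  by (simp_all add: wsign_def)

lemma wsign_sq: "wsign A B * wsign A B = 1"
proof -
  have "((-1::real) ^ n) * (-1) ^ n = ((-1) * (-1)) ^ n" for n by (simp add: power_mult_distrib)
  thus ?thesis by (simp add: wsign_def)
qed

lemma wsign_swap:
  assumes "finite A" "finite B" "A \<inter> B = {}"
  shows "wsign A B * wsign B A = (-1) ^ (card A * card B)"
proof -
  have "invs B A = prod.swap ` {(a, b). a \<in> A \<and> b \<in> B \<and> b < a}" by (auto simp: invs_def image_iff)
  hence c: "card (invs B A) = card {(a, b). a \<in> A \<and> b \<in> B \<and> b < a}"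
    by (simp add: card_image)
  have "A \<times> B = invs A B \<union> {(a, b). a \<in> A \<and> b \<in> B \<and> b < a}"
    using assms(3) by (auto simp: invs_def)
  moreover have "invs A B \<inter> {(a, b). a \<in> A \<and> b \<in> B \<and> b < a} = {}" by (auto simp: invs_def)
  moreover have "finite {(a, b). a \<in> A \<and> b \<in> B \<and> b < a}"
    by (rule finite_subset[of _ "A \<times> B"]) (use assms in auto)
  ultimately have "card A * card B = card (invs A B) + card (invs B A)"
    using assms by (simp add: c card_Un_disjoint inv_finite flip: card_cartesian_product)
  thus ?thesis by (simp add: wsign_inv power_add)
qed


lemma wedge_nz: "(x \<^bold>\<and> y) S \<noteq> 0 \<Longrightarrow> finite S \<and> (\<exists>A\<subseteq>S. x A \<noteq> 0 \<and> y (S - A) \<noteq> 0)"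
proof (rule ccontr)
  assume a: "(x \<^bold>\<and> y) S \<noteq> 0" "\<not> (finite S \<and> (\<exists>A\<subseteq>S. x A \<noteq> 0 \<and> y (S - A) \<noteq> 0))"
  show False
  proof (cases "finite S")
    case True
    hence "(x \<^bold>\<and> y) S = 0" using a(2) by (auto simp: wedge_apply intro!: sum.neutral)
    thus False using a(1) by simp
  qed (use a in \<open>simp add: wedge_inf\<close>)
qed

lemma avoids_wedge: "avoids k x \<Longrightarrow> avoids k y \<Longrightarrow> avoids k (x \<^bold>\<and> y)"
  unfolding avoids_def
proof (intro allI impI)
  fix S assume a: "\<forall>S. x S \<noteq> 0 \<longrightarrow> k \<notin> S" "\<forall>S. y S \<noteq> 0 \<longrightarrow> k \<notin> S" "(x \<^bold>\<and> y) S \<noteq> 0"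
  obtain A where "A \<subseteq> S" "x A \<noteq> 0" "y (S - A) \<noteq> 0" using wedge_nz[OF a(3)] by blast
  thus "k \<notin> S" using a(1,2) by blast
qed
lemma allc_wedge_right: "allc k y \<Longrightarrow> allc k (x \<^bold>\<and> y)"
  unfolding allc_def
proof (intro allI impI)
  fix S assume a: "\<forall>S. y S \<noteq> 0 \<longrightarrow> k \<in> S" "(x \<^bold>\<and> y) S \<noteq> 0"
  obtain A where "A \<subseteq> S" "x A \<noteq> 0" "y (S - A) \<noteq> 0" using wedge_nz[OF a(2)] by blast
  thus "k \<in> S" using a(1) by blast
qed
lemma allc_wedge_left: "allc k x \<Longrightarrow> allc k (x \<^bold>\<and> y)"
  unfolding allc_def
proof (intro allI impI)
  fix S assume a: "\<forall>S. x S \<noteq> 0 \<longrightarrow> k \<in> S" "(x \<^bold>\<and> y) S \<noteq> 0"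
  obtain A where "A \<subseteq> S" "x A \<noteq> 0" "y (S - A) \<noteq> 0" using wedge_nz[OF a(2)] by blast
  thus "k \<in> S" using a(1) by blast
qed
lemma allc_both: "allc k x \<Longrightarrow> allc k y \<Longrightarrow> x \<^bold>\<and> y = 0"
  unfolding allc_def
proof (rule ext, rule ccontr)
  fix S assume a: "\<forall>S. x S \<noteq> 0 \<longrightarrow> k \<in> S" "\<forall>S. y S \<noteq> 0 \<longrightarrow> k \<in> S" "(x \<^bold>\<and> y) S \<noteq> 0 S"
  hence "(x \<^bold>\<and> y) S \<noteq> 0" by simp
  then obtain A where "A \<subseteq> S" "x A \<noteq> 0" "y (S - A) \<noteq> 0" using wedge_nz[of x y S] by blast
  thus False using a(1,2) by blast
qed
lemma fin_wedge: "fin (x \<^bold>\<and> y)"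
  by (simp add: fin_def wedge_inf)
lemma evenx_wedge: "evenx x \<Longrightarrow> evenx y \<Longrightarrow> evenx (x \<^bold>\<and> y)"
  unfolding evenx_def
proof (intro allI impI)
  fix S assume e: "\<forall>S. x S \<noteq> 0 \<longrightarrow> even (card S)" "\<forall>S. y S \<noteq> 0 \<longrightarrow> even (card S)"
    and n: "(x \<^bold>\<and> y) S \<noteq> 0"
  then obtain A where A: "finite S" "A \<subseteq> S" "x A \<noteq> 0" "y (S - A) \<noteq> 0" using wedge_nz[of x y S] by blast
  have "card S = card A + card (S - A)" using A
    by (metis card_Diff_subset card_mono finite_subset le_add_diff_inverse)
  thus "even (card S)" using e A by auto
qed

lemma fin_one: "fin ext_one" by (auto simp: fin_def ext_one_def)
lemma fin_add: "fin x \<Longrightarrow> fin y \<Longrightarrow> fin (x + y)" by (auto simp: fin_def)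
lemma fin_smult: "fin x \<Longrightarrow> fin (ext_smult c x)" by (auto simp: fin_def ext_smult_def)

lemma wedge_one_left: "fin y \<Longrightarrow> ext_one \<^bold>\<and> y = y"
proof (rule ext)
  fix S assume f: "fin y"
  show "(ext_one \<^bold>\<and> y) S = y S"
  proof (cases "finite S")
    case True
    have "(\<Sum>A\<in>Pow S. wsign A (S - A) * ext_one A * y (S - A)) = (\<Sum>A\<in>Pow S. if {} = A then y S else 0)"
      by (rule sum.cong) (auto simp: ext_one_def)
    thus ?thesis using True by (simp add: wedge_apply)
  qed (use f in \<open>auto simp: fin_def wedge_inf\<close>)
qed

lemma wedge_one_right: "fin y \<Longrightarrow> y \<^bold>\<and> ext_one = y"
proof (rule ext)
  fix S assume f: "fin y"
  show "(y \<^bold>\<and> ext_one) S = y S"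
  proof (cases "finite S")
    case True
    have "(\<Sum>A\<in>Pow S. wsign A (S - A) * y A * ext_one (S - A)) = (\<Sum>A\<in>Pow S. if S = A then y S else 0)"
      by (rule sum.cong) (auto simp: ext_one_def)
    thus ?thesis using True by (simp add: wedge_apply)
  qed (use f in \<open>auto simp: fin_def wedge_inf\<close>)
qed

lemma wedge_assoc: "(x \<^bold>\<and> y) \<^bold>\<and> z = x \<^bold>\<and> (y \<^bold>\<and> z)"
proof (rule ext)
  fix S show "((x \<^bold>\<and> y) \<^bold>\<and> z) S = (x \<^bold>\<and> (y \<^bold>\<and> z)) S"
  proof (cases "finite S")
    case False thus ?thesis by (simp add: wedge_inf)
  next
    case True
    define g where "g C D = wsign C D * wsign C (S - C - D) * wsign D (S - C - D) * x C * y D * z (S - C - D)" for C D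
    define h where "h A C = wsign A (S - A) * wsign C (A - C) * x C * y (A - C) * z (S - A)" for A C
    have "((x \<^bold>\<and> y) \<^bold>\<and> z) S = (\<Sum>A\<in>Pow S. \<Sum>C\<in>Pow A. h A C)"
      unfolding h_def using True
      by (auto simp: wedge_apply sum_distrib_left sum_distrib_right finite_subset algebra_simps intro!: sum.cong)
    also have "\<dots> = (\<Sum>A\<in>Pow S. \<Sum>C\<in>{C. C \<in> Pow S \<and> C \<subseteq> A}. h A C)"
      by (rule sum.cong) (auto intro!: sum.cong)
    also have "\<dots> = (\<Sum>C\<in>Pow S. \<Sum>A\<in>{A. A \<in> Pow S \<and> C \<subseteq> A}. h A C)"
      by (rule sum.swap_restrict) (use True in auto)
    also have "\<dots> = (\<Sum>C\<in>Pow S. \<Sum>D\<in>Pow (S - C). g C D)"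
    proof (rule sum.cong[OF refl])
      fix C assume C: "C \<in> Pow S"
      have "(\<Sum>D\<in>Pow (S - C). g C D) = (\<Sum>A\<in>{A. A \<in> Pow S \<and> C \<subseteq> A}. h A C)"
      proof (rule sum.reindex_bij_witness[where j="\<lambda>D. C \<union> D" and i="\<lambda>A. A - C"])
        fix D assume D: "D \<in> Pow (S - C)"
        have fs: "finite C" "finite D" "finite (S - C - D)" using True C D by (auto intro: finite_subset)
        have e1: "C \<union> D - C = D" "S - (C \<union> D) = S - C - D" using D by auto
        show "h (C \<union> D) C = g C D"
          unfolding h_def g_def e1 using D fs
          by (subst wsign_union_left) (auto simp: algebra_simps)
      qed (use C in auto)
      thus "(\<Sum>A\<in>{A. A \<in> Pow S \<and> C \<subseteq> A}. h A C) = (\<Sum>D\<in>Pow (S - C). g C D)" by simp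
    qed
    also have "\<dots> = (x \<^bold>\<and> (y \<^bold>\<and> z)) S"
    proof -
      have "(x \<^bold>\<and> (y \<^bold>\<and> z)) S = (\<Sum>C\<in>Pow S. wsign C (S - C) * x C * (\<Sum>D\<in>Pow (S - C). wsign D (S - C - D) * y D * z (S - C - D)))"
        using True by (auto simp: wedge_apply intro!: sum.cong)
      also have "\<dots> = (\<Sum>C\<in>Pow S. \<Sum>D\<in>Pow (S - C). g C D)"
      proof (rule sum.cong[OF refl])
        fix C assume C: "C \<in> Pow S"
        show "wsign C (S - C) * x C * (\<Sum>D\<in>Pow (S - C). wsign D (S - C - D) * y D * z (S - C - D)) = (\<Sum>D\<in>Pow (S - C). g C D)"
          unfolding sum_distrib_left
        proof (rule sum.cong[OF refl])
          fix D assume D: "D \<in> Pow (S - C)"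
          have fs: "finite C" "finite D" "finite (S - C - D)" using True C D by (auto intro: finite_subset)
          have "S - C = D \<union> (S - C - D)" using D by auto
          hence "wsign C (S - C) = wsign C D * wsign C (S - C - D)"
            using fs by (metis Diff_disjoint inf_commute wsign_union_right Int_Diff)
          thus "wsign C (S - C) * x C * (wsign D (S - C - D) * y D * z (S - C - D)) = g C D"
            by (simp add: g_def algebra_simps)
        qed
      qed
      finally show ?thesis by simp
    qed
    finally show ?thesis .
  qed
qed

lemma wedge_comm_even:
  assumes "evenx x" shows "x \<^bold>\<and> y = y \<^bold>\<and> x"
proof (rule ext)
  fix S show "(x \<^bold>\<and> y) S = (y \<^bold>\<and> x) S"
  proof (cases "finite S")
    case False thus ?thesis by (simp add: wedge_inf)
  next
    case True
    have "(y \<^bold>\<and> x) S = (\<Sum>B\<in>Pow S. wsign B (S - B) * y B * x (S - B))" using True by (simp add: wedge_apply)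
    also have "\<dots> = (\<Sum>A\<in>Pow S. wsign A (S - A) * x A * y (S - A))"
    proof (rule sum.reindex_bij_witness[where i="\<lambda>A. S - A" and j="\<lambda>A. S - A"])
      fix A assume A: "A \<in> Pow S"
      have e: "S - (S - A) = A" using A by auto
      show "wsign (S - A) (S - (S - A)) * x (S - A) * y (S - (S - A)) = wsign A (S - A) * y A * x (S - A)"
      proof (cases "x (S - A) = 0")
        case False
        hence ev: "even (card (S - A))" using assms by (auto simp: evenx_def)
        have fs: "finite A" "finite (S - A)" using A True by (auto intro: finite_subset)
        have "wsign A (S - A) * wsign (S - A) A = 1"
          using wsign_swap[OF fs] ev by (simp add: Int_Diff)
        hence "wsign (S - A) A = wsign A (S - A)"
          by (metis mult.assoc mult_1 mult.commute wsign_sq)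
        thus ?thesis using e by simp
      qed (simp add: e)
    qed auto
    finally show ?thesis using True by (simp add: wedge_apply)
  qed
qed


lemma sum_Pow_insert:
  assumes "finite S0" "i \<notin> S0"
  shows "(\<Sum>A\<in>Pow (insert i S0). f A) = (\<Sum>A\<in>Pow S0. f A) + (\<Sum>A\<in>Pow S0. f (insert i A))"
proof -
  have inj: "inj_on (insert i) (Pow S0)" using assms(2) by (auto simp: inj_on_def)
  have d: "Pow S0 \<inter> insert i ` Pow S0 = {}" using assms(2) by auto
  show ?thesis unfolding Pow_insert
    by (subst sum.union_disjoint) (use assms d inj in \<open>auto simp: sum.reindex\<close>)
qed

definition cnt :: "int \<Rightarrow> int set \<Rightarrow> nat" where "cnt i A = card {s\<in>A. s > i}"
definition clt :: "int \<Rightarrow> int set \<Rightarrow> nat" where "clt i A = card {s\<in>A. s < i}"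

lemma cnt_split: "finite S \<Longrightarrow> A \<subseteq> S \<Longrightarrow> cnt i S = cnt i A + cnt i (S - A)"
proof -
  assume a: "finite S" "A \<subseteq> S"
  have "{s\<in>S. s > i} = {s\<in>A. s > i} \<union> {s\<in>S - A. s > i}" using a by auto
  thus ?thesis unfolding cnt_def using a
    by (simp add: card_Un_disjoint finite_subset disjoint_iff)
qed

lemma clt_cnt: "finite A \<Longrightarrow> i \<notin> A \<Longrightarrow> clt i A + cnt i A = card A"
proof -
  assume a: "finite A" "i \<notin> A"
  have "A = {s\<in>A. s < i} \<union> {s\<in>A. s > i}"
  proof (intro set_eqI iffI)
    fix s assume "s \<in> A" thus "s \<in> {s\<in>A. s < i} \<union> {s\<in>A. s > i}" using a by (cases "s < i") (auto, metis linorder_neqE_linordered_idom)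
  qed auto
  hence "card A = card ({s\<in>A. s < i} \<union> {s\<in>A. s > i})" by simp
  also have "\<dots> = clt i A + cnt i A" unfolding clt_def cnt_def using a
    by (subst card_Un_disjoint) auto
  finally show ?thesis by simp
qed

lemma wsign_ins_left: "finite A \<Longrightarrow> finite B \<Longrightarrow> i \<notin> A \<Longrightarrow> wsign (insert i A) B = wsign A B * (-1) ^ cnt i B"
  using wsign_union_left[of A "{i}" B] by (simp add: wsign_single_left cnt_def)
lemma wsign_ins_right: "finite A \<Longrightarrow> finite B \<Longrightarrow> i \<notin> B \<Longrightarrow> wsign A (insert i B) = wsign A B * (-1) ^ clt i A"
  using wsign_union_right[of B "{i}" A] by (simp add: wsign_single_right clt_def)

lemma psi_dag_apply: "psi_dag i x S = (if finite S \<and> i \<notin> S then (-1) ^ cnt i S * x (insert i S) else 0)"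
  by (simp add: psi_dag_def cnt_def)

lemma m1pow_add: "(-1::real) ^ (m + n) = (-1) ^ m * (-1) ^ n" by (simp add: power_add)
lemma m1pow_sq: "(-1::real) ^ n * (-1) ^ n = 1"
proof -
  have "((-1::real) ^ n) * (-1) ^ n = ((-1) * (-1)) ^ n" by (simp add: power_mult_distrib)
  thus ?thesis by simp
qed

lemma psi_dag_wedge:
  "psi_dag i (x \<^bold>\<and> y) = psi_dag i x \<^bold>\<and> y + par x \<^bold>\<and> psi_dag i y"
proof (rule ext)
  fix S
  show "psi_dag i (x \<^bold>\<and> y) S = (psi_dag i x \<^bold>\<and> y + par x \<^bold>\<and> psi_dag i y) S"
  proof (cases "finite S")
    case False thus ?thesis by (simp add: psi_dag_def wedge_inf)
  next
    case fS: True
    show ?thesis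
    proof (cases "i \<in> S")
      case True
      define S0 where "S0 = S - {i}"
      have S: "S = insert i S0" "i \<notin> S0" "finite S0" using True fS by (auto simp: S0_def)
      have "(psi_dag i x \<^bold>\<and> y) S = (\<Sum>A\<in>Pow S0. wsign A (S - A) * psi_dag i x A * y (S - A))
          + (\<Sum>A\<in>Pow S0. wsign (insert i A) (S - insert i A) * psi_dag i x (insert i A) * y (S - insert i A))"
        using fS S by (simp add: wedge_apply sum_Pow_insert)
      also have "\<dots> = (\<Sum>A\<in>Pow S0. wsign A (S0 - A) * (-1) ^ card A * x (insert i A) * y (insert i (S0 - A)))"
      proof -
        have "(\<Sum>A\<in>Pow S0. wsign A (S - A) * psi_dag i x A * y (S - A)) =
              (\<Sum>A\<in>Pow S0. wsign A (S0 - A) * (-1) ^ card A * x (insert i A) * y (insert i (S0 - A)))"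
        proof (rule sum.cong[OF refl])
          fix A assume A: "A \<in> Pow S0"
          have fA: "finite A" "finite (S0 - A)" "i \<notin> A" "i \<notin> S0 - A" using A S by (auto intro: finite_subset)
          have e: "S - A = insert i (S0 - A)" using A S by auto
          have "wsign A (S - A) * (-1) ^ cnt i A = wsign A (S0 - A) * ((-1) ^ clt i A * (-1) ^ cnt i A)"
            unfolding e using fA by (simp add: wsign_ins_right)
          also have "\<dots> = wsign A (S0 - A) * (-1) ^ card A" using clt_cnt[OF fA(1) fA(3)]
            by (simp flip: m1pow_add)
          finally show "wsign A (S - A) * psi_dag i x A * y (S - A) = wsign A (S0 - A) * (-1) ^ card A * x (insert i A) * y (insert i (S0 - A))"
            using fA by (simp add: psi_dag_apply e mult.assoc[symmetric])
        qed
        moreover have "(\<Sum>A\<in>Pow S0. wsign (insert i A) (S - insert i A) * psi_dag i x (insert i A) * y (S - insert i A)) = 0"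
          by (rule sum.neutral) (simp add: psi_dag_apply)
        ultimately show ?thesis by simp
      qed
      finally have L: "(psi_dag i x \<^bold>\<and> y) S = (\<Sum>A\<in>Pow S0. wsign A (S0 - A) * (-1) ^ card A * x (insert i A) * y (insert i (S0 - A)))" .
      have "(par x \<^bold>\<and> psi_dag i y) S = (\<Sum>A\<in>Pow S0. wsign A (S - A) * par x A * psi_dag i y (S - A))
          + (\<Sum>A\<in>Pow S0. wsign (insert i A) (S - insert i A) * par x (insert i A) * psi_dag i y (S - insert i A))"
        using fS S by (simp add: wedge_apply sum_Pow_insert)
      also have "\<dots> = (\<Sum>A\<in>Pow S0. - (wsign A (S0 - A) * (-1) ^ card A * x (insert i A) * y (insert i (S0 - A))))"
      proof -
        have "(\<Sum>A\<in>Pow S0. wsign A (S - A) * par x A * psi_dag i y (S - A)) = 0"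
          by (rule sum.neutral) (use S in \<open>auto simp: psi_dag_apply\<close>)
        moreover have "(\<Sum>A\<in>Pow S0. wsign (insert i A) (S - insert i A) * par x (insert i A) * psi_dag i y (S - insert i A)) =
            (\<Sum>A\<in>Pow S0. - (wsign A (S0 - A) * (-1) ^ card A * x (insert i A) * y (insert i (S0 - A))))"
        proof (rule sum.cong[OF refl])
          fix A assume A: "A \<in> Pow S0"
          have fA: "finite A" "finite (S0 - A)" "i \<notin> A" "i \<notin> S0 - A" using A S by (auto intro: finite_subset)
          have e: "S - insert i A = S0 - A" using A S by auto
          have w: "wsign (insert i A) (S0 - A) = wsign A (S0 - A) * (-1) ^ cnt i (S0 - A)"
            using fA by (simp add: wsign_ins_left)
          have c: "card (insert i A) = Suc (card A)" using fA by simp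
          have "wsign (insert i A) (S0 - A) * (-1) ^ card (insert i A) * (-1) ^ cnt i (S0 - A)
               = - (wsign A (S0 - A) * (-1) ^ card A) * ((-1) ^ cnt i (S0 - A) * (-1) ^ cnt i (S0 - A))"
            unfolding w c by simp
          also have "\<dots> = - (wsign A (S0 - A) * (-1) ^ card A)" by (simp add: m1pow_sq)
          finally have k: "wsign (insert i A) (S0 - A) * (-1) ^ card (insert i A) * (-1) ^ cnt i (S0 - A) = - (wsign A (S0 - A) * (-1) ^ card A)" .
          show "wsign (insert i A) (S - insert i A) * par x (insert i A) * psi_dag i y (S - insert i A) =
             - (wsign A (S0 - A) * (-1) ^ card A * x (insert i A) * y (insert i (S0 - A)))"
            unfolding e using fA k by (simp add: psi_dag_apply par_def)
        qed
        ultimately show ?thesis by simp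
      qed
      finally have R: "(par x \<^bold>\<and> psi_dag i y) S = (\<Sum>A\<in>Pow S0. - (wsign A (S0 - A) * (-1) ^ card A * x (insert i A) * y (insert i (S0 - A))))" .
      show ?thesis using L R True by (simp add: psi_dag_apply sum_negf)
    next
      case False
      have L: "psi_dag i (x \<^bold>\<and> y) S = (-1) ^ cnt i S *
         ((\<Sum>A\<in>Pow S. wsign A (insert i S - A) * x A * y (insert i S - A))
          + (\<Sum>A\<in>Pow S. wsign (insert i A) (insert i S - insert i A) * x (insert i A) * y (insert i S - insert i A)))"
        using fS False by (simp add: psi_dag_apply wedge_apply sum_Pow_insert)
      have R1: "(psi_dag i x \<^bold>\<and> y) S = (\<Sum>A\<in>Pow S. (-1) ^ cnt i S * (wsign (insert i A) (insert i S - insert i A) * x (insert i A) * y (insert i S - insert i A)))"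
        unfolding wedge_apply[OF fS]
      proof (rule sum.cong[OF refl])
        fix A assume A: "A \<in> Pow S"
        have fA: "finite A" "finite (S - A)" "i \<notin> A" "i \<notin> S - A" using A fS False by (auto intro: finite_subset)
        have e: "insert i S - insert i A = S - A" using A False by auto
        have "(-1) ^ cnt i S * wsign (insert i A) (S - A) = wsign A (S - A) * ((-1) ^ cnt i S * (-1) ^ cnt i (S - A))"
          using fA by (simp add: wsign_ins_left)
        also have "\<dots> = wsign A (S - A) * (-1) ^ cnt i A"
          using cnt_split[OF fS, of A i] A by (simp add: m1pow_add mult.assoc m1pow_sq)
        finally have k: "(-1) ^ cnt i S * wsign (insert i A) (S - A) = wsign A (S - A) * (-1) ^ cnt i A" .
        show "wsign A (S - A) * psi_dag i x A * y (S - A) =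
          (-1) ^ cnt i S * (wsign (insert i A) (insert i S - insert i A) * x (insert i A) * y (insert i S - insert i A))"
          unfolding e using fA k by (simp add: psi_dag_apply)
      qed
      have R2: "(par x \<^bold>\<and> psi_dag i y) S = (\<Sum>A\<in>Pow S. (-1) ^ cnt i S * (wsign A (insert i S - A) * x A * y (insert i S - A)))"
        unfolding wedge_apply[OF fS]
      proof (rule sum.cong[OF refl])
        fix A assume A: "A \<in> Pow S"
        have fA: "finite A" "finite (S - A)" "i \<notin> A" "i \<notin> S - A" using A fS False by (auto intro: finite_subset)
        have e: "insert i S - A = insert i (S - A)" using A False by auto
        have "(-1) ^ cnt i S * wsign A (insert i (S - A)) = wsign A (S - A) * ((-1) ^ cnt i S * (-1) ^ clt i A)"
          using fA by (simp add: wsign_ins_right)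
        also have "\<dots> = wsign A (S - A) * ((-1) ^ cnt i (S - A) * (-1) ^ (clt i A + cnt i A))"
          using cnt_split[OF fS, of A i] A by (simp add: m1pow_add algebra_simps)
        also have "\<dots> = wsign A (S - A) * ((-1) ^ card A * (-1) ^ cnt i (S - A))"
          using clt_cnt[OF fA(1) fA(3)] by simp
        finally have k: "(-1) ^ cnt i S * wsign A (insert i (S - A)) = wsign A (S - A) * ((-1) ^ card A * (-1) ^ cnt i (S - A))" .
        show "wsign A (S - A) * par x A * psi_dag i y (S - A) =
          (-1) ^ cnt i S * (wsign A (insert i S - A) * x A * y (insert i S - A))"
          unfolding e using fA k by (simp add: psi_dag_apply par_def)
      qed
      have "psi_dag i (x \<^bold>\<and> y) S = (\<Sum>A\<in>Pow S. (-1) ^ cnt i S * (wsign A (insert i S - A) * x A * y (insert i S - A)))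
          + (\<Sum>A\<in>Pow S. (-1) ^ cnt i S * (wsign (insert i A) (insert i S - insert i A) * x (insert i A) * y (insert i S - insert i A)))"
        unfolding L by (simp only: distrib_left sum_distrib_left)
      thus ?thesis unfolding plus_fun_apply R1 R2 by (simp only: add.commute)
    qed
  qed
qed


lemma e_apply: "e a A = (if A = {a} then 1 else 0)" by (simp add: e_def)

lemma e_wedge_e: "e a \<^bold>\<and> e b = (\<lambda>S. if S = {a, b} \<and> a \<noteq> b then wsign {a} {b} else 0)"
proof (rule ext)
  fix S show "(e a \<^bold>\<and> e b) S = (if S = {a, b} \<and> a \<noteq> b then wsign {a} {b} else 0)"
  proof (cases "finite S")
    case True
    have "(e a \<^bold>\<and> e b) S = (\<Sum>A\<in>Pow S. if {a} = A then wsign {a} (S - {a}) * e b (S - {a}) else 0)"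
      unfolding wedge_apply[OF True] by (rule sum.cong) (auto simp: e_apply)
    also have "\<dots> = (if a \<in> S then wsign {a} (S - {a}) * e b (S - {a}) else 0)"
      using True by simp
    also have "\<dots> = (if S = {a, b} \<and> a \<noteq> b then wsign {a} {b} else 0)"
      by (auto simp: e_apply)
    finally show ?thesis .
  next
    case False
    hence "S \<noteq> {a, b}" by auto
    thus ?thesis using False by (simp add: wedge_inf)
  qed
qed

lemma sgnpow_neg: "sgnpow (-a) = sgnpow a" by (simp add: sgnpow_def)
lemma sgnpow_m1: "sgnpow (-a-1) = - sgnpow a" by (simp add: sgnpow_def)
lemma sgnpow_sq: "sgnpow a * sgnpow a = 1" by (simp add: sgnpow_def)

lemma Xe_eq: "a < 0 \<Longrightarrow> Xe a = (\<lambda>S. if S = {a, -a-1} then - sgnpow a else 0)"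
proof -
  assume a: "a < 0"
  have "{x \<in> {a}. x < -a-1} = {a}" using a by auto
  hence w: "wsign {a} {-a-1} = -1" by (simp add: wsign_single_right)
  show ?thesis unfolding Xe_def e_wedge_e using a w by (auto simp: ext_smult_def fun_eq_iff)
qed

lemma Xe_apply: "a < 0 \<Longrightarrow> Xe a S = (if S = {a, -a-1} then - sgnpow a else 0)"
  by (simp add: Xe_eq)

lemma Xe_even: "a < 0 \<Longrightarrow> evenx (Xe a)"
  by (auto simp: evenx_def Xe_apply)
lemma Xe_fin: "a < 0 \<Longrightarrow> fin (Xe a)"
  by (auto simp: fin_def Xe_apply)
lemma Xe_allc1: "a < 0 \<Longrightarrow> allc a (Xe a)"
  by (auto simp: allc_def Xe_apply)
lemma Xe_allc2: "a < 0 \<Longrightarrow> allc (-a-1) (Xe a)"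
  by (auto simp: allc_def Xe_apply)
lemma Xe_avoids: "a < 0 \<Longrightarrow> k \<noteq> a \<Longrightarrow> k \<noteq> -a-1 \<Longrightarrow> avoids k (Xe a)"
  by (auto simp: avoids_def Xe_apply)
lemma Xe_sq: "a < 0 \<Longrightarrow> Xe a \<^bold>\<and> Xe a = 0"
  by (rule allc_both) (auto intro: Xe_allc1)

lemma psi_dag_avoid: "avoids i y \<Longrightarrow> psi_dag i y = 0"
  by (auto simp: avoids_def psi_dag_def fun_eq_iff)
lemma avoids_psi: "avoids k y \<Longrightarrow> k \<noteq> i \<Longrightarrow> avoids k (psi_dag i y)"
  by (auto simp: avoids_def psi_dag_def)
lemma par_even: "evenx x \<Longrightarrow> par x = x"
  by (auto simp: evenx_def par_def fun_eq_iff)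
lemma par_zero: "par 0 = 0" by (simp add: par_def fun_eq_iff)
lemma psi_dag_add: "psi_dag i (x + y) = psi_dag i x + psi_dag i y"
  by (auto simp: psi_dag_def fun_eq_iff algebra_simps)
lemma psi_dag_smult: "psi_dag i (ext_smult c x) = ext_smult c (psi_dag i x)"
  by (auto simp: psi_dag_def fun_eq_iff ext_smult_def algebra_simps)
lemma psi_dag_zero[simp]: "psi_dag i 0 = 0"
  by (auto simp: psi_dag_def fun_eq_iff)
lemma fin_psi: "fin (psi_dag i x)" by (auto simp: fin_def psi_dag_def)

lemma Xe_psipsi: "a < 0 \<Longrightarrow> psi_dag a (psi_dag (-a-1) (Xe a)) = ext_smult (- sgnpow a) ext_one"
proof -
  assume a: "a < 0"
  have 1: "psi_dag (-a-1) (Xe a) = (\<lambda>S. if S = {a} then - sgnpow a else 0)"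
  proof (rule ext)
    fix S
    have ne: "a \<noteq> -a-1" using a by auto
    have "finite S \<and> -a-1 \<notin> S \<and> insert (-a-1) S = {a, -a-1} \<longleftrightarrow> S = {a}"
    proof
      assume h: "finite S \<and> -a-1 \<notin> S \<and> insert (-a-1) S = {a, -a-1}"
      show "S = {a}"
      proof (rule set_eqI)
        fix x
        have i: "x \<in> insert (-a-1) S \<longleftrightarrow> x \<in> {a,-a-1}" using h by simp
        have "a \<in> insert (-a-1) S" using h by simp
        hence "a \<in> S" using ne by blast
        thus "x \<in> S \<longleftrightarrow> x \<in> {a}" using i h by blast
      qed
    next
      assume "S = {a}" thus "finite S \<and> -a-1 \<notin> S \<and> insert (-a-1) S = {a, -a-1}" using ne by auto
    qed
    moreover have c0: "{s. s = a \<and> - a - 1 < s} = {}" using a by auto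
    ultimately show "psi_dag (-a-1) (Xe a) S = (if S = {a} then - sgnpow a else 0)"
      unfolding psi_dag_def using a by (auto simp: Xe_apply c0)
  qed
  show ?thesis
    unfolding 1 by (auto simp: psi_dag_def fun_eq_iff ext_smult_def ext_one_def)
qed

lemma D_add: "omega_hat_dag N (x + y) = omega_hat_dag N x + omega_hat_dag N y"
  by (simp add: omega_hat_dag_def psi_dag_add smult_add sum.distrib)
lemma D_smult: "omega_hat_dag N (ext_smult c x) = ext_smult c (omega_hat_dag N x)"
  by (simp add: omega_hat_dag_def psi_dag_smult smult_smult smult_sum mult.commute)
lemma D_zero[simp]: "omega_hat_dag N 0 = 0"
  by (simp add: omega_hat_dag_def)
lemma D_sum: "finite I \<Longrightarrow> omega_hat_dag N (\<Sum>i\<in>I. f i) = (\<Sum>i\<in>I. omega_hat_dag N (f i))"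
proof (induct I rule: finite_induct)
  case empty show ?case by (simp only: sum.empty D_zero)
next
  case (insert x F) show ?case by (simp only: sum.insert[OF insert(1,2)] D_add insert(3))
qed

lemma D_X:
  assumes a: "a \<in> {-int N..-1}" and av: "avoids a y" "avoids (-a-1) y" and fy: "fin y"
  shows "omega_hat_dag N (Xe a \<^bold>\<and> y) = y + Xe a \<^bold>\<and> omega_hat_dag N y"
proof -
  have a0: "a < 0" using a by auto
  have ev: "par (Xe a) = Xe a" using Xe_even[OF a0] by (rule par_even)
  have step: "ext_smult (sgnpow i) (psi_dag (-i-1) (psi_dag i (Xe a \<^bold>\<and> y)))
     = (if i = -a-1 then y else 0) + Xe a \<^bold>\<and> ext_smult (sgnpow i) (psi_dag (-i-1) (psi_dag i y))"
    if i: "i \<in> {0..int N - 1}" for i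
  proof -
    have exp: "psi_dag (-i-1) (psi_dag i (Xe a \<^bold>\<and> y)) =
       psi_dag (-i-1) (psi_dag i (Xe a)) \<^bold>\<and> y + par (psi_dag i (Xe a)) \<^bold>\<and> psi_dag (-i-1) y
       + (psi_dag (-i-1) (Xe a) \<^bold>\<and> psi_dag i y + Xe a \<^bold>\<and> psi_dag (-i-1) (psi_dag i y))"
      by (simp add: psi_dag_wedge ev psi_dag_add)
    show ?thesis
    proof (cases "i = -a-1")
      case True
      hence ii: "-i-1 = a" by simp
      have z: "psi_dag a y = 0" "psi_dag (-a-1) y = 0" using av by (simp_all add: psi_dag_avoid)
      have hP: "psi_dag a (psi_dag (-a-1) (Xe a)) \<^bold>\<and> y = ext_smult (- sgnpow a) y"
        using Xe_psipsi[OF a0] wedge_one_left[OF fy] by (simp add: wedge_smult_left)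
      have ii2: "- (- a - 1) - 1 = a" by simp
      show ?thesis unfolding exp unfolding True ii2 using z hP
        by (simp add: smult_add smult_smult wedge_smult_right sgnpow_m1 sgnpow_sq)
    next
      case False
      have "i \<noteq> a" using i a by auto
      hence z: "psi_dag i (Xe a) = 0" "psi_dag (-i-1) (Xe a) = 0"
        using False a0 by (auto intro!: psi_dag_avoid Xe_avoids)
      show ?thesis unfolding exp z par_zero using False
        by (simp add: wedge_smult_right)
    qed
  qed
  have "omega_hat_dag N (Xe a \<^bold>\<and> y) = (\<Sum>i\<in>{0..int N - 1}. (if i = -a-1 then y else 0) + Xe a \<^bold>\<and> ext_smult (sgnpow i) (psi_dag (-i-1) (psi_dag i y)))"
    unfolding omega_hat_dag_def by (rule sum.cong) (simp_all add: step)
  also have "\<dots> = y + Xe a \<^bold>\<and> omega_hat_dag N y"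
    unfolding sum.distrib omega_hat_dag_def wedge_sum_right using a by (simp add: if_distrib cong: if_cong)
  finally show ?thesis .
qed


lemma Xe_even_all: "evenx (Xe a)"
  unfolding Xe_def e_wedge_e evenx_def ext_smult_def by auto

lemma Xe_comm: "Xe a \<^bold>\<and> (Xe b \<^bold>\<and> y) = Xe b \<^bold>\<and> (Xe a \<^bold>\<and> y)"
  by (simp add: wedge_assoc[symmetric] wedge_comm_even[OF Xe_even_all, of a "Xe b"])

definition XS :: "int set \<Rightarrow> ext" where
  "XS T = Finite_Set.fold (\<lambda>a y. Xe a \<^bold>\<and> y) ext_one T"

lemma XS_empty[simp]: "XS {} = ext_one" by (simp add: XS_def)

lemma XS_insert: "finite T \<Longrightarrow> a \<notin> T \<Longrightarrow> XS (insert a T) = Xe a \<^bold>\<and> XS T"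
proof -
  assume a: "finite T" "a \<notin> T"
  interpret c: comp_fun_commute "\<lambda>a y. Xe a \<^bold>\<and> y"
    by unfold_locales (simp add: fun_eq_iff Xe_comm)
  show ?thesis unfolding XS_def using a by simp
qed

lemma XS_in: "finite T \<Longrightarrow> a \<in> T \<Longrightarrow> a < 0 \<Longrightarrow> Xe a \<^bold>\<and> XS T = 0"
proof -
  assume a: "finite T" "a \<in> T" "a < 0"
  have "XS T = Xe a \<^bold>\<and> XS (T - {a})" using a XS_insert[of "T - {a}" a] by (simp add: insert_absorb)
  thus ?thesis by (simp add: wedge_assoc[symmetric] Xe_sq[OF a(3)])
qed

lemma avoids_one: "avoids k ext_one" by (simp add: avoids_def ext_one_def)

lemma XS_avoids:
  assumes "finite T" "\<forall>b\<in>T. b < 0 \<and> b \<noteq> a" "a < 0"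
  shows "avoids a (XS T) \<and> avoids (-a-1) (XS T)"
  using assms
proof (induct T rule: finite_induct)
  case empty thus ?case by (simp add: avoids_one)
next
  case (insert b F)
  have "avoids a (Xe b)" "avoids (-a-1) (Xe b)" using insert by (auto intro!: Xe_avoids)
  thus ?case using insert by (simp add: XS_insert avoids_wedge)
qed

lemma foldr_e_supp: "foldr (\<^bold>\<and>) (map e xs) ext_one S \<noteq> 0 \<Longrightarrow> S = set xs"
proof (induct xs arbitrary: S)
  case Nil thus ?case by (simp add: ext_one_def split: if_splits)
next
  case (Cons x xs)
  from Cons(2) have "(e x \<^bold>\<and> foldr (\<^bold>\<and>) (map e xs) ext_one) S \<noteq> 0" by simp
  then obtain A where A: "A \<subseteq> S" "e x A \<noteq> 0" "foldr (\<^bold>\<and>) (map e xs) ext_one (S - A) \<noteq> 0"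
    using wedge_nz by blast
  have "A = {x}" using A(2) by (simp add: e_apply split: if_splits)
  moreover have "S - A = set xs" using Cons(1) A(3) by blast
  ultimately show ?case using A(1) by auto
qed

lemma fin_foldr: "fin z \<Longrightarrow> fin (foldr (\<^bold>\<and>) xs z)"
  by (cases xs) (simp_all add: fin_wedge)

lemma foldr_wedge: "foldr (\<^bold>\<and>) xs z \<^bold>\<and> w = foldr (\<^bold>\<and>) xs (z \<^bold>\<and> w)"
  by (induct xs) (simp_all add: wedge_assoc)

lemma sum_ext_diff_zero: "x - y = (0::ext) \<longleftrightarrow> x = y" by simp

locale KS =
  fixes N :: nat and K :: "int set"
  assumes KN: "K \<in> Kset N"
begin

abbreviation "B \<equiv> Kbar N K"
abbreviation "D \<equiv> omega_hat_dag N"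
abbreviation "om \<equiv> omega_Kbar N K"

lemma K_sub: "K \<subseteq> {-int N..int N - 1}" using KN by (simp add: Kset_def)
lemma K_fin: "finite K" using K_sub finite_subset by blast
lemma K_disj: "k \<in> K \<Longrightarrow> -k-1 \<notin> K"
proof
  assume "k \<in> K" "-k-1 \<in> K"
  hence "k \<in> K \<inter> ((\<lambda>k. -k-1) ` K)" by (auto intro!: image_eqI[of _ _ "-k-1"])
  thus False using KN unfolding Kset_def by blast
qed
lemma B_sub: "B \<subseteq> {-int N..-1}" by (auto simp: Kbar_def)
lemma B_fin: "finite B" by (simp add: Kbar_def)
lemma B_neg: "a \<in> B \<Longrightarrow> a < 0" by (auto simp: Kbar_def)
lemma B_notK: "a \<in> B \<Longrightarrow> a \<notin> K" by (auto simp: Kbar_def)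
lemma B_notK2: "a \<in> B \<Longrightarrow> -a-1 \<notin> K"
  by (auto simp: Kbar_def image_iff)
lemma notB: "a \<in> {-int N..-1} \<Longrightarrow> a \<notin> B \<Longrightarrow> a \<in> K \<or> -a-1 \<in> K"
  by (auto simp: Kbar_def image_iff)

definition "eK = eset K"

lemma eK_supp: "eK S \<noteq> 0 \<Longrightarrow> S = K"
proof -
  assume "eK S \<noteq> 0"
  hence "S = set (rev (sorted_list_of_set K))"
    unfolding eK_def eset_def wedge_list_def by (rule foldr_e_supp)
  thus ?thesis using K_fin by simp
qed
lemma eK_allc: "k \<in> K \<Longrightarrow> allc k eK" using eK_supp by (auto simp: allc_def)
lemma eK_avoids: "k \<notin> K \<Longrightarrow> avoids k eK" using eK_supp by (auto simp: avoids_def)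
lemma eK_fin: "fin eK" unfolding eK_def eset_def wedge_list_def by (rule fin_foldr[OF fin_one])

lemma D_eK: "D eK = 0"
proof -
  have "psi_dag (-i-1) (psi_dag i eK) = 0" for i
  proof (cases "i \<in> K")
    case True
    hence "avoids (-i-1) eK" using K_disj eK_avoids by blast
    hence "avoids (-i-1) (psi_dag i eK)" by (rule avoids_psi) presburger
    thus ?thesis by (rule psi_dag_avoid)
  next
    case False thus ?thesis using eK_avoids psi_dag_avoid by simp
  qed
  thus ?thesis by (simp add: omega_hat_dag_def)
qed

definition bas :: "int set \<Rightarrow> ext" where "bas T = XS T \<^bold>\<and> eK"

lemma bas_fin: "fin (bas T)" by (simp add: bas_def fin_wedge)

lemma X_bas: "a \<in> B \<Longrightarrow> T \<subseteq> B \<Longrightarrow> Xe a \<^bold>\<and> bas T = (if a \<in> T then 0 else bas (insert a T))"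
proof -
  assume a: "a \<in> B" "T \<subseteq> B"
  have fT: "finite T" using a(2) B_fin finite_subset by blast
  show ?thesis unfolding bas_def wedge_assoc[symmetric]
    using XS_in[OF fT _ B_neg[OF a(1)]] XS_insert[OF fT] by auto
qed

lemma bas_avoids: "T \<subseteq> B \<Longrightarrow> a \<in> B - T \<Longrightarrow> avoids a (bas T) \<and> avoids (-a-1) (bas T)"
proof -
  assume a: "T \<subseteq> B" "a \<in> B - T"
  have fT: "finite T" using a(1) B_fin finite_subset by blast
  have x: "avoids a (XS T) \<and> avoids (-a-1) (XS T)"
    by (rule XS_avoids[OF fT]) (use a B_neg in auto)
  have "avoids a eK" "avoids (-a-1) eK" using a B_notK B_notK2 eK_avoids by auto
  thus ?thesis using x by (simp add: bas_def avoids_wedge)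
qed

lemma D_bas_empty: "D (bas {}) = 0"
  by (simp add: bas_def wedge_one_left[OF eK_fin] D_eK)

lemma D_bas: "T \<subseteq> B \<Longrightarrow> D (bas T) = (\<Sum>b\<in>T. bas (T - {b}))"
proof -
  assume T: "T \<subseteq> B"
  have fT: "finite T" using T B_fin finite_subset by blast
  show ?thesis using fT T
  proof (induct T rule: finite_subset_induct')
    case empty thus ?case by (simp add: D_bas_empty)
  next
    case (insert a F)
    have aN: "a \<in> {-int N..-1}" using insert B_sub by auto
    have av: "avoids a (bas F)" "avoids (-a-1) (bas F)" using bas_avoids[of F a] insert by auto
    have "bas (insert a F) = Xe a \<^bold>\<and> bas F" using X_bas[of a F] insert by simp
    hence "D (bas (insert a F)) = bas F + Xe a \<^bold>\<and> D (bas F)"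
      using D_X[OF aN av bas_fin] by simp
    also have "\<dots> = bas F + (\<Sum>b\<in>F. bas (insert a (F - {b})))"
      unfolding insert(5) wedge_sum_right
    proof (rule arg_cong[where f="\<lambda>t. bas F + t"], rule sum.cong[OF refl])
      fix b assume "b \<in> F"
      thus "Xe a \<^bold>\<and> bas (F - {b}) = bas (insert a (F - {b}))" using X_bas[of a "F - {b}"] insert by auto
    qed
    also have "\<dots> = (\<Sum>b\<in>insert a F. bas (insert a F - {b}))"
    proof -
      have "(\<Sum>b\<in>insert a F. bas (insert a F - {b})) = bas (insert a F - {a}) + (\<Sum>b\<in>F. bas (insert a F - {b}))"
        using insert by (simp add: sum.insert)
      moreover have "insert a F - {a} = F" using insert by auto
      moreover have "(\<Sum>b\<in>F. bas (insert a F - {b})) = (\<Sum>b\<in>F. bas (insert a (F - {b})))"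
        by (rule sum.cong) (use insert in \<open>auto simp: insert_Diff_if\<close>)
      ultimately show ?thesis by simp
    qed
    finally show ?case .
  qed
qed

end


lemma lam0: "(\<lambda>a. 0) = (0::ext)" by (simp add: fun_eq_iff)
lemma lamplus: "(\<lambda>a. (x::ext) a + y a) = x + y" by (simp add: fun_eq_iff)
lemmas fixlam = lam0 lamplus

context KS begin

lemma om_eq: "om = (\<Sum>a\<in>B. Xe a)"
proof -
  let ?xs = "sorted_list_of_set B"
  have b1: "bij_betw (\<lambda>a. a - 1) {1..card B} {..<card B}"
  proof (rule bij_betw_imageI)
    show "inj_on (\<lambda>a. a - 1) {1..card B}" by (auto simp: inj_on_def)
    show "(\<lambda>a. a - 1) ` {1..card B} = {..<card B}"
    proof
      show "{..<card B} \<subseteq> (\<lambda>a. a - 1) ` {1..card B}"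
      proof
        fix k assume "k \<in> {..<card B}"
        thus "k \<in> (\<lambda>a. a - 1) ` {1..card B}" by (intro image_eqI[of _ _ "Suc k"]) auto
      qed
    qed auto
  qed
  have b2: "bij_betw ((!) ?xs) {..<card B} B"
    by (rule bij_betw_nth) (simp_all add: B_fin)
  have "bij_betw (\<lambda>a. ?xs ! (a - 1)) {1..card B} B"
    using bij_betw_trans[OF b1 b2] by (simp add: comp_def)
  thus ?thesis unfolding omega_Kbar_def Kbar_nth_def
    by (rule sum.reindex_bij_betw)
qed

lemma omegaN_eq: "omegaN N = (\<Sum>a\<in>{-int N..-1}. Xe a)"
  unfolding omegaN_def
  by (rule sum.reindex_bij_witness[where i=uminus and j=uminus])
     (auto simp: Xe_def sgnpow_neg)

lemma om_bas: "T \<subseteq> B \<Longrightarrow> om \<^bold>\<and> bas T = (\<Sum>a\<in>B - T. bas (insert a T))"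
proof -
  assume T: "T \<subseteq> B"
  have "om \<^bold>\<and> bas T = (\<Sum>a\<in>B. if a \<in> T then 0 else bas (insert a T))"
    unfolding om_eq wedge_sum_left by (rule sum.cong) (use T in \<open>auto simp: X_bas\<close>)
  also have "\<dots> = (\<Sum>a\<in>B - T. bas (insert a T))"
    using B_fin by (simp add: sum.If_cases Diff_eq)
  finally show ?thesis .
qed

lemma omN_bas: "T \<subseteq> B \<Longrightarrow> omegaN N \<^bold>\<and> bas T = om \<^bold>\<and> bas T"
proof -
  assume T: "T \<subseteq> B"
  have z: "Xe a \<^bold>\<and> bas T = 0" if a: "a \<in> {-int N..-1} - B" for a
  proof -
    have a0: "a < 0" using a by auto
    obtain k where k: "k \<in> K" "allc k (Xe a)"
      using notB[of a] a Xe_allc1[OF a0] Xe_allc2[OF a0] by auto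
    have "allc k (bas T)" unfolding bas_def by (rule allc_wedge_right, rule eK_allc, fact)
    thus ?thesis using k by (simp add: allc_both)
  qed
  have "omegaN N \<^bold>\<and> bas T = (\<Sum>a\<in>{-int N..-1}. Xe a \<^bold>\<and> bas T)"
    unfolding omegaN_eq wedge_sum_left ..
  also have "\<dots> = (\<Sum>a\<in>{-int N..-1} - B. Xe a \<^bold>\<and> bas T) + (\<Sum>a\<in>B. Xe a \<^bold>\<and> bas T)"
    by (rule sum.subset_diff) (use B_sub in auto)
  also have "\<dots> = (\<Sum>a\<in>B. Xe a \<^bold>\<and> bas T)" using z by simp
  also have "\<dots> = om \<^bold>\<and> bas T" unfolding om_eq wedge_sum_left ..
  finally show ?thesis .
qed

inductive Hd :: "nat \<Rightarrow> ext \<Rightarrow> bool" where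
  Hd0: "Hd d 0"
| Hdb: "T \<subseteq> B \<Longrightarrow> card T = d \<Longrightarrow> Hd d (bas T)"
| Hda: "Hd d x \<Longrightarrow> Hd d y \<Longrightarrow> Hd d (x + y)"
| Hds: "Hd d x \<Longrightarrow> Hd d (ext_smult c x)"

lemma Hd_sum: "finite I \<Longrightarrow> (\<And>i. i \<in> I \<Longrightarrow> Hd d (f i)) \<Longrightarrow> Hd d (\<Sum>i\<in>I. f i)"
proof (induct I rule: finite_induct)
  case empty show ?case by (simp only: sum.empty) (rule Hd.Hd0)
next
  case (insert x F) show ?case unfolding sum.insert[OF insert(1,2)] by (rule Hd.Hda) (use insert in auto)
qed

lemma Hd_fin: "Hd d y \<Longrightarrow> fin y"
  by (induct rule: Hd.induct) (auto simp: fin_def bas_fin[unfolded fin_def] ext_smult_def)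

lemma Hd_X: "a \<in> B \<Longrightarrow> Hd d y \<Longrightarrow> Hd (Suc d) (Xe a \<^bold>\<and> y)"
proof -
  assume a: "a \<in> B"
  show "Hd d y \<Longrightarrow> Hd (Suc d) (Xe a \<^bold>\<and> y)"
  proof (induct rule: Hd.induct)
    case (Hd0 d) show ?case by (simp only: wedge_zero_right) (rule Hd.Hd0)
  next
    case (Hdb T d)
    have fT: "finite T" using Hdb B_fin finite_subset by blast
    show ?case using Hdb a X_bas[of a T] fT by (auto intro: Hd.Hd0 Hd.Hdb)
  next
    case (Hda d x y) show ?case unfolding wedge_add_right by (rule Hd.Hda[OF Hda(2) Hda(4)])
  next
    case (Hds d x c) thus ?case by (simp add: wedge_smult_right Hd.Hds)
  qed
qed

lemma Hd_om: "Hd d y \<Longrightarrow> Hd (Suc d) (om \<^bold>\<and> y)"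
proof (induct rule: Hd.induct)
  case (Hd0 d) show ?case by (simp only: wedge_zero_right) (rule Hd.Hd0)
next
  case (Hdb T d)
  have fT: "finite T" using Hdb B_fin finite_subset by blast
  show ?case unfolding om_bas[OF Hdb(1)]
    by (rule Hd_sum) (use Hdb fT B_fin in \<open>auto intro!: Hd.Hdb\<close>)
next
  case (Hda d x y) show ?case unfolding wedge_add_right by (rule Hd.Hda[OF Hda(2) Hda(4)])
next
  case (Hds d x c) thus ?case by (simp add: wedge_smult_right Hd.Hds)
qed

lemma Hd_omN: "Hd d y \<Longrightarrow> omegaN N \<^bold>\<and> y = om \<^bold>\<and> y"
  by (induct rule: Hd.induct) (simp_all add: fixlam omN_bas wedge_add_right wedge_smult_right)

lemma Hd_big: "Hd d y \<Longrightarrow> card B < d \<Longrightarrow> y = 0"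
proof (induct rule: Hd.induct)
  case (Hdb T d)
  have "card T \<le> card B" by (rule card_mono[OF B_fin Hdb(1)])
  thus ?case using Hdb by simp
qed simp_all

lemma D_diff: "D (x - y) = D x - D y"
  by (simp add: smult_diff D_add D_smult)

lemma comm_bas:
  assumes T: "T \<subseteq> B"
  shows "D (om \<^bold>\<and> bas T) = om \<^bold>\<and> D (bas T) + ext_smult (real (card B) - 2 * real (card T)) (bas T)"
proof -
  have fT: "finite T" using T B_fin finite_subset by blast
  define X where "X = (\<Sum>a\<in>B - T. \<Sum>b\<in>T. bas (insert a (T - {b})))"
  have "D (om \<^bold>\<and> bas T) = (\<Sum>a\<in>B - T. D (bas (insert a T)))"
    unfolding om_bas[OF T] using B_fin by (simp add: D_sum)
  also have "\<dots> = (\<Sum>a\<in>B - T. bas T + (\<Sum>b\<in>T. bas (insert a (T - {b}))))"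
  proof (rule sum.cong[OF refl])
    fix a assume a: "a \<in> B - T"
    have "D (bas (insert a T)) = (\<Sum>b\<in>insert a T. bas (insert a T - {b}))"
      using a T by (intro D_bas) auto
    also have "\<dots> = bas (insert a T - {a}) + (\<Sum>b\<in>T. bas (insert a T - {b}))"
      using a fT by (simp add: sum.insert)
    also have "\<dots> = bas T + (\<Sum>b\<in>T. bas (insert a (T - {b})))"
    proof -
      have "insert a T - {a} = T" using a by auto
      moreover have "(\<Sum>b\<in>T. bas (insert a T - {b})) = (\<Sum>b\<in>T. bas (insert a (T - {b})))"
        by (rule sum.cong) (use a in \<open>auto simp: insert_Diff_if\<close>)
      ultimately show ?thesis by simp
    qed
    finally show "D (bas (insert a T)) = bas T + (\<Sum>b\<in>T. bas (insert a (T - {b})))" .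
  qed
  also have "\<dots> = ext_smult (real (card (B - T))) (bas T) + X"
    unfolding sum.distrib X_def smult_sum_const ..
  finally have L: "D (om \<^bold>\<and> bas T) = ext_smult (real (card (B - T))) (bas T) + X" .
  have "om \<^bold>\<and> D (bas T) = (\<Sum>b\<in>T. om \<^bold>\<and> bas (T - {b}))"
    unfolding D_bas[OF T] wedge_sum_right ..
  also have "\<dots> = (\<Sum>b\<in>T. bas T + (\<Sum>a\<in>B - T. bas (insert a (T - {b}))))"
  proof (rule sum.cong[OF refl])
    fix b assume b: "b \<in> T"
    have "om \<^bold>\<and> bas (T - {b}) = (\<Sum>a\<in>B - (T - {b}). bas (insert a (T - {b})))"
      using T by (intro om_bas) auto
    also have "B - (T - {b}) = insert b (B - T)" using b T by auto
    also have "(\<Sum>a\<in>insert b (B - T). bas (insert a (T - {b}))) = bas (insert b (T - {b})) + (\<Sum>a\<in>B - T. bas (insert a (T - {b})))"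
      using b B_fin by (simp add: sum.insert)
    also have "insert b (T - {b}) = T" using b by auto
    finally show "om \<^bold>\<and> bas (T - {b}) = bas T + (\<Sum>a\<in>B - T. bas (insert a (T - {b})))" .
  qed
  also have "\<dots> = ext_smult (real (card T)) (bas T) + X"
    unfolding sum.distrib X_def smult_sum_const by (simp add: sum.swap[of _ T])
  finally have R: "om \<^bold>\<and> D (bas T) = ext_smult (real (card T)) (bas T) + X" .
  have c: "real (card (B - T)) = real (card B) - real (card T)"
    using card_Diff_subset[OF fT T] card_mono[OF B_fin T] by simp
  show ?thesis unfolding L R c by (simp add: fun_eq_iff ext_smult_def algebra_simps)
qed

lemma Hd_comm: "Hd d y \<Longrightarrow> D (om \<^bold>\<and> y) = om \<^bold>\<and> D y + ext_smult (real (card B) - 2 * real d) y"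
proof (induct rule: Hd.induct)
  case (Hd0 d) show ?case by (simp only: wedge_zero_right D_zero smult_zero add_0_right)
next
  case (Hdb T d) thus ?case using comm_bas by simp
next
  case (Hda d x y) show ?case unfolding wedge_add_right D_add Hda(2) Hda(4) smult_add by (simp only: add_ac)
next
  case (Hds d x c) show ?case
    unfolding wedge_smult_right D_smult Hds(2) smult_add smult_smult by (simp only: mult.commute)
qed

end


lemma avoids_diff: "avoids k x \<Longrightarrow> avoids k y \<Longrightarrow> avoids k (x - y)"
  unfolding avoids_def
proof (intro allI impI)
  fix S assume a: "\<forall>S. x S \<noteq> 0 \<longrightarrow> k \<notin> S" "\<forall>S. y S \<noteq> 0 \<longrightarrow> k \<notin> S" "(x - y) S \<noteq> 0"
  hence "x S \<noteq> 0 \<or> y S \<noteq> 0" by auto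
  thus "k \<notin> S" using a(1,2) by blast
qed

lemma wpow_0: "wpow x 0 = ext_one" by (simp add: wpow_def)
lemma wpow_Suc: "wpow x (Suc n) = x \<^bold>\<and> wpow x n" by (simp add: wpow_def)

lemma smult_eq_zero: "c \<noteq> 0 \<Longrightarrow> ext_smult c x = 0 \<Longrightarrow> x = 0"
  by (auto simp: ext_smult_def fun_eq_iff)

locale KST = KS +
  fixes l :: nat and T :: "nat \<Rightarrow> nat \<Rightarrow> nat"
  assumes TS: "T \<in> SYT (card (Kbar N K)) l"
begin

abbreviation "m \<equiv> card B"

definition "al i = Kbar_nth N K (T i 1)"
definition "be i = Kbar_nth N K (T i 2)"
definition "Y i = Xe (al i) - Xe (be i)"

lemma l2: "2 * l \<le> m" using TS by (simp add: SYT_def)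

lemma Tbij: "bij_betw (\<lambda>(i, c). T i c) (syt_cells m l) {1..m}" using TS by (simp add: SYT_def)

lemma cell: "1 \<le> i \<Longrightarrow> i \<le> l \<Longrightarrow> c \<in> {1, 2} \<Longrightarrow> (i, c) \<in> syt_cells m l"
  by (auto simp: syt_cells_def)

lemma Tval: "1 \<le> i \<Longrightarrow> i \<le> l \<Longrightarrow> c \<in> {1, 2} \<Longrightarrow> T i c \<in> {1..m}"
proof -
  assume a: "1 \<le> i" "i \<le> l" "c \<in> {1, 2}"
  have img: "(\<lambda>(i, c). T i c) ` syt_cells m l = {1..m}" using Tbij by (simp add: bij_betw_def)
  have "(\<lambda>(i, c). T i c) (i, c) \<in> (\<lambda>(i, c). T i c) ` syt_cells m l" by (rule imageI[OF cell[OF a]])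
  thus ?thesis unfolding img by simp
qed

lemma Tinj: "1 \<le> i \<Longrightarrow> i \<le> l \<Longrightarrow> c \<in> {1, 2} \<Longrightarrow> 1 \<le> i' \<Longrightarrow> i' \<le> l \<Longrightarrow> c' \<in> {1, 2} \<Longrightarrow>
   T i c = T i' c' \<Longrightarrow> i = i'"
proof -
  assume a: "1 \<le> i" "i \<le> l" "c \<in> {1, 2}" "1 \<le> i'" "i' \<le> l" "c' \<in> {1, 2}" "T i c = T i' c'"
  have inj: "inj_on (\<lambda>(i, c). T i c) (syt_cells m l)" using Tbij by (simp add: bij_betw_def)
  have "(i, c) = (i', c')"
    by (rule inj_onD[OF inj]) (use a cell in auto)
  thus ?thesis by simp
qed

lemma nth_in: "k \<in> {1..m} \<Longrightarrow> Kbar_nth N K k \<in> B"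
proof -
  assume k: "k \<in> {1..m}"
  have "k - 1 < length (sorted_list_of_set B)" using k by auto
  hence "sorted_list_of_set B ! (k - 1) \<in> set (sorted_list_of_set B)" by (rule nth_mem)
  thus ?thesis using B_fin by (simp add: Kbar_nth_def)
qed

lemma nth_inj: "k \<in> {1..m} \<Longrightarrow> k' \<in> {1..m} \<Longrightarrow> Kbar_nth N K k = Kbar_nth N K k' \<Longrightarrow> k = k'"
proof -
  assume k: "k \<in> {1..m}" "k' \<in> {1..m}" "Kbar_nth N K k = Kbar_nth N K k'"
  have "distinct (sorted_list_of_set B)" by simp
  hence "k - 1 = k' - 1" using k by (auto simp: Kbar_nth_def nth_eq_iff_index_eq)
  thus ?thesis using k by auto
qed

lemma ab_in: "i \<in> {1..l} \<Longrightarrow> al i \<in> B \<and> be i \<in> B"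
  by (auto simp: al_def be_def intro!: nth_in Tval)

lemma ab_distinct:
  assumes "i \<in> {1..l}" "j \<in> {1..l}" "i \<noteq> j" "k \<in> {al i, be i}"
  shows "k \<noteq> al j \<and> k \<noteq> be j"
proof -
  have ne: "Kbar_nth N K (T i c) \<noteq> Kbar_nth N K (T j c')" if c: "c \<in> {1,2}" "c' \<in> {1,2}" for c c'
  proof
    assume eq: "Kbar_nth N K (T i c) = Kbar_nth N K (T j c')"
    have v: "T i c \<in> {1..m}" "T j c' \<in> {1..m}" using Tval[of i c] Tval[of j c'] assms c by auto
    have "T i c = T j c'" by (rule nth_inj[OF v eq])
    hence "i = j" using Tinj[of i c j c'] assms c by auto
    thus False using assms(3) by simp
  qed
  show ?thesis using ne[of 1 1] ne[of 1 2] ne[of 2 1] ne[of 2 2] assms(4) unfolding al_def be_def by auto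
qed

lemma Y_Hd: "a \<in> {1..l} \<Longrightarrow> Hd d y \<Longrightarrow> Hd (Suc d) (Y a \<^bold>\<and> y)"
proof -
  assume a: "a \<in> {1..l}" "Hd d y"
  have "Y a \<^bold>\<and> y = Xe (al a) \<^bold>\<and> y + ext_smult (-1) (Xe (be a) \<^bold>\<and> y)"
    unfolding Y_def wedge_diff_left by (rule smult_diff)
  moreover have "Hd (Suc d) (Xe (al a) \<^bold>\<and> y + ext_smult (-1) (Xe (be a) \<^bold>\<and> y))"
    using ab_in[OF a(1)] by (intro Hd.Hda Hd.Hds Hd_X a(2)) auto
  ultimately show ?thesis by simp
qed

definition "V rs = foldr (\<^bold>\<and>) (map Y rs) (bas {})"

lemma V_Hd: "set rs \<subseteq> {1..l} \<Longrightarrow> Hd (length rs) (V rs)"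
proof (induct rs)
  case Nil show ?case unfolding V_def by (simp, rule Hd.Hdb) auto
next
  case (Cons a rs) thus ?case unfolding V_def by (simp add: Y_Hd)
qed

lemma V_fin: "fin (V rs)" unfolding V_def by (rule fin_foldr[OF bas_fin])

lemma V_avoids: "set rs \<subseteq> {1..l} \<Longrightarrow> i \<in> {1..l} \<Longrightarrow> i \<notin> set rs \<Longrightarrow> k \<in> {al i, be i} \<Longrightarrow>
   avoids k (V rs) \<and> avoids (-k-1) (V rs)"
proof (induct rs)
  case Nil
  have "k \<in> B" using Nil ab_in by auto
  thus ?case unfolding V_def using bas_avoids[of "{}" k] by simp
next
  case (Cons j rs)
  have j: "j \<in> {1..l}" "i \<noteq> j" using Cons by auto
  have d: "k \<noteq> al j \<and> k \<noteq> be j" using ab_distinct[OF Cons(3) j(1) j(2) Cons(5)] .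
  have kB: "k \<in> B" using Cons ab_in by auto
  have k0: "k < 0" by (rule B_neg[OF kB])
  have j0: "al j < 0" "be j < 0" using ab_in[OF j(1)] B_neg by auto
  have "avoids k (Y j) \<and> avoids (-k-1) (Y j)" unfolding Y_def
    using d k0 j0 by (auto intro!: avoids_diff Xe_avoids)
  moreover have "avoids k (V rs) \<and> avoids (-k-1) (V rs)" using Cons by auto
  ultimately show ?case unfolding V_def by (simp add: avoids_wedge)
qed

lemma V_D: "distinct rs \<Longrightarrow> set rs \<subseteq> {1..l} \<Longrightarrow> D (V rs) = 0"
proof (induct rs)
  case Nil show ?case unfolding V_def by (simp add: D_bas_empty)
next
  case (Cons i rs)
  have i: "i \<in> {1..l}" "i \<notin> set rs" "set rs \<subseteq> {1..l}" using Cons by auto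
  have IH: "D (V rs) = 0" using Cons by auto
  have aN: "al i \<in> {-int N..-1}" "be i \<in> {-int N..-1}" using ab_in[OF i(1)] B_sub by auto
  have av1: "avoids (al i) (V rs) \<and> avoids (-(al i)-1) (V rs)" using V_avoids[OF i(3,1,2)] by auto
  have av2: "avoids (be i) (V rs) \<and> avoids (-(be i)-1) (V rs)" using V_avoids[OF i(3,1,2)] by auto
  have "V (i # rs) = Xe (al i) \<^bold>\<and> V rs - Xe (be i) \<^bold>\<and> V rs"
    unfolding V_def Y_def by (simp add: wedge_diff_left)
  hence "D (V (i # rs)) = D (Xe (al i) \<^bold>\<and> V rs) - D (Xe (be i) \<^bold>\<and> V rs)" by (simp add: D_diff)
  also have "\<dots> = 0"
    using D_X[OF aN(1) _ _ V_fin] D_X[OF aN(2) _ _ V_fin] av1 av2 IH by simp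
  finally show ?case .
qed

definition "V0 = VT N K l T \<^bold>\<and> eset K"

lemma V0_eq: "V0 = V [1..<Suc l]"
  unfolding V0_def VT_def wedge_list_def V_def foldr_wedge Y_def al_def be_def bas_def eK_def
  by simp

lemma V0_Hd: "Hd l V0"
proof -
  have s: "set [1..<Suc l] \<subseteq> {1..l}" by auto
  have "Hd (length [1..<Suc l]) (V [1..<Suc l])" by (rule V_Hd[OF s])
  thus ?thesis unfolding V0_eq length_upt by (simp only: diff_Suc_1)
qed
lemma V0_D: "D V0 = 0"
proof -
  have s: "set [1..<Suc l] \<subseteq> {1..l}" by auto
  show ?thesis unfolding V0_eq by (rule V_D[OF distinct_upt s])
qed

definition "F n = wpow om n \<^bold>\<and> V0"

lemma F_0: "F 0 = V0" unfolding F_def wpow_0 by (rule wedge_one_left[OF Hd_fin[OF V0_Hd]])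
lemma F_Suc: "F (Suc n) = om \<^bold>\<and> F n" unfolding F_def wpow_Suc wedge_assoc ..
lemma F_Hd: "Hd (l + n) (F n)"
  by (induct n) (simp_all add: F_0 V0_Hd F_Suc Hd_om)

lemma F_D: "D (F (Suc n)) = ext_smult (real (Suc n) * (real m - 2 * real l - real n)) (F n)"
proof (induct n)
  case 0
  show ?case unfolding F_Suc Hd_comm[OF F_Hd] using V0_D by (simp add: F_0)
next
  case (Suc n)
  have "D (F (Suc (Suc n))) = om \<^bold>\<and> D (F (Suc n)) + ext_smult (real m - 2 * real (l + Suc n)) (F (Suc n))"
    unfolding F_Suc[of "Suc n"] by (rule Hd_comm[OF F_Hd])
  also have "\<dots> = ext_smult (real (Suc n) * (real m - 2 * real l - real n) + (real m - 2 * real (l + Suc n))) (F (Suc n))"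
    unfolding Suc wedge_smult_right F_Suc[symmetric] smult_addc ..
  also have "real (Suc n) * (real m - 2 * real l - real n) + (real m - 2 * real (l + Suc n))
     = real (Suc (Suc n)) * (real m - 2 * real l - real (Suc n))"
    by (simp add: algebra_simps)
  finally show ?case .
qed

lemma F_big: "m < l + n \<Longrightarrow> F n = 0"
  using Hd_big[OF F_Hd] by simp

lemma F_vanish: "m - 2 * l < n \<Longrightarrow> F n = 0"
proof (induct "m + 1 - n" arbitrary: n rule: less_induct)
  case less
  show ?case
  proof (cases "m < l + n")
    case True thus ?thesis by (rule F_big)
  next
    case False
    have "F (Suc n) = 0" by (rule less(1)) (use False less(2) in auto)
    hence "ext_smult (real (Suc n) * (real m - 2 * real l - real n)) (F n) = 0"
      using F_D[of n] by simp
    moreover have "real (Suc n) * (real m - 2 * real l - real n) \<noteq> 0"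
      using less(2) l2 by auto
    ultimately show ?thesis by (rule smult_eq_zero[rotated])
  qed
qed

end


theorem mainTheorem9:
  fixes N l j :: nat and K :: "int set" and T :: "nat \<Rightarrow> nat \<Rightarrow> nat"
  assumes "K \<in> Kset N"
    and "T \<in> SYT (card (Kbar N K)) l"
    and "j \<le> card (Kbar N K) - 2 * l"
  shows "omega_hat N (Phi N l j T K) =
           (if j < card (Kbar N K) - 2 * l
            then ext_smult (real (j + 1)) (Phi N l (j + 1) T K) else 0)
       \<and> omega_hat_dag N (Phi N l j T K) =
           (if 0 < j
            then ext_smult (real (card (Kbar N K) - 2 * l - j + 1)) (Phi N l (j - 1) T K) else 0)"
proof -
  interpret KST N K l T using assms(1,2) by (simp add: KST_def KS_def KST_axioms_def)
  have Phi_eq: "Phi N l n T K = ext_smult (1 / fact n) (F n)" for n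
    by (simp add: Phi_def F_def V0_def)
  have l2': "2 * l \<le> m" by (rule l2)
  have P1: "omega_hat N (Phi N l j T K) = ext_smult (1 / fact j) (F (Suc j))"
    unfolding Phi_eq omega_hat_def wedge_smult_right Hd_omN[OF F_Hd] F_Suc ..
  have A: "omega_hat N (Phi N l j T K) =
           (if j < m - 2 * l then ext_smult (real (j + 1)) (Phi N l (j + 1) T K) else 0)"
  proof (cases "j < m - 2 * l")
    case True
    have fp: "(0::real) < fact j" by simp
    have "real (j + 1) * (1 / fact (j + 1)) = (1 / fact j :: real)"
    proof -
      have "fact j + fact j * real j > (0::real)" using fp by (simp add: add_pos_nonneg)
      thus ?thesis by (simp add: field_simps)
    qed
    thus ?thesis unfolding P1 unfolding Phi_eq using True by (simp add: smult_smult)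
  next
    case False
    hence "F (Suc j) = 0" using assms(3) by (intro F_vanish) auto
    thus ?thesis unfolding P1 using False by simp
  qed
  have Bq: "omega_hat_dag N (Phi N l j T K) =
           (if 0 < j then ext_smult (real (m - 2 * l - j + 1)) (Phi N l (j - 1) T K) else 0)"
  proof (cases j)
    case 0
    thus ?thesis unfolding Phi_eq D_smult by (simp add: F_0 V0_D)
  next
    case (Suc n)
    have r: "real (m - 2 * l - Suc n + 1) = real m - 2 * real l - real n"
      using assms(3) l2' Suc by (simp add: of_nat_diff)
    have gen: "s \<noteq> 0 \<Longrightarrow> f \<noteq> 0 \<Longrightarrow> 1 / (s * f) * (s * X) = X * (1 / f)" for s f X :: real
      by (simp add: field_simps)
    have "1 / fact (Suc n) * (real (Suc n) * (real m - 2 * real l - real n)) =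
          (real m - 2 * real l - real n) * (1 / fact n :: real)"
      unfolding fact_Suc by (rule gen) simp_all
    thus ?thesis unfolding Suc diff_Suc_1 unfolding Phi_eq D_smult F_D r by (simp add: smult_smult)
  qed
  show ?thesis using A Bq by simp
qed


end
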